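(* Let $k$ be a positive integer and let $\sigma\in S_n$ have at least one $k$th root. Let $\ell_1,\dots,\ell_m$ be the distinct cycle lengths occurring in the disjoint cycle decomposition of $\sigma$ (fixed points counted as cycles of length $1$), and for each $i$ let $M_i\subseteq\{1,\dots,n\}$ be the set of points lying in cycles of $\sigma$ of length $\ell_i$ and $\sigma_i$ the restriction of $\sigma$ to $M_i$, viewed as a permutation of $M_i$. Then \[ \operatorname{re}_k(\sigma)-\operatorname{ro}_k(\sigma)=\prod_{i=1}^m\big(\operatorname{re}_k(\sigma_i)-\operatorname{ro}_k(\sigma_i)\big), \] where $\operatorname{re}_k(\sigma)$, $\operatorname{ro}_k(\sigma)$ are counted in $S_n$ and $\operatorname{re}_k(\sigma_i)$, $\operatorname{ro}_k(\sigma_i)$ are counted in the symmetric group on $M_i$.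
   Context: For a permutation $\pi$ of a finite set $M$, a $k$th root of $\pi$ is a permutation $\tau$ of $M$ with $\tau^k=\pi$. $\operatorname{re}_k(\pi)$ (resp. $\operatorname{ro}_k(\pi)$) denotes the number of $k$th roots of $\pi$ that are even (resp. odd) permutations of $M$. *)

theory Defs
  imports "HOL-Combinatorics.Combinatorics"
begin

definition re :: "nat \<Rightarrow> 'a set \<Rightarrow> ('a \<Rightarrow> 'a) \<Rightarrow> nat" where
  "re k M p = card {tau. tau permutes M \<and> tau ^^ k = p \<and> evenperm tau}"

definition ro :: "nat \<Rightarrow> 'a set \<Rightarrow> ('a \<Rightarrow> 'a) \<Rightarrow> nat" where
  "ro k M p = card {tau. tau permutes M \<and> tau ^^ k = p \<and> \<not> evenperm tau}"

definition cyc_len :: "('a \<Rightarrow> 'a) \<Rightarrow> 'a \<Rightarrow> nat" where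
  "cyc_len sigma x = card (orbit sigma x)"

definition cyc_block :: "('a \<Rightarrow> 'a) \<Rightarrow> 'a set \<Rightarrow> nat \<Rightarrow> 'a set" where
  "cyc_block sigma M l = {x \<in> M. cyc_len sigma x = l}"

end

theory Submission
  imports Defs
begin

definition RT :: "nat \<Rightarrow> 'a set \<Rightarrow> ('a \<Rightarrow> 'a) \<Rightarrow> ('a \<Rightarrow> 'a) set" where
  "RT k M p = {tau. tau permutes M \<and> tau ^^ k = p}"

definition SS :: "nat \<Rightarrow> 'a set \<Rightarrow> ('a \<Rightarrow> 'a) \<Rightarrow> int" where
  "SS k M p = (\<Sum>tau\<in>RT k M p. sign tau)"

lemma finite_RT: "finite M \<Longrightarrow> finite (RT k M p)"
  by (rule finite_subset[OF _ finite_permutations[of M]]) (auto simp: RT_def)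

lemma diff_eq:
  assumes "finite M"
  shows "int (re k M p) - int (ro k M p) = SS k M p"
proof -
  let ?E = "{tau. tau permutes M \<and> tau ^^ k = p \<and> evenperm tau}"
  let ?O = "{tau. tau permutes M \<and> tau ^^ k = p \<and> \<not> evenperm tau}"
  have fE: "finite ?E" and fO: "finite ?O"
    using finite_RT[OF assms, of k p] by (auto simp: RT_def elim!: finite_subset[rotated])
  have U: "RT k M p = ?E \<union> ?O" by (auto simp: RT_def)
  have "SS k M p = sum sign ?E + sum sign ?O"
    unfolding SS_def U by (rule sum.union_disjoint[OF fE fO]) auto
  also have "sum sign ?E = int (card ?E)" by (simp add: sign_def)
  also have "sum sign ?O = - int (card ?O)" by (simp add: sign_def)
  finally show ?thesis by (simp add: re_def ro_def)
qed

lemma orbit_comm: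
  assumes "\<And>y. tau (p y) = p (tau y)"
  shows "orbit p (tau x) = tau ` orbit p x"
proof
  show "orbit p (tau x) \<subseteq> tau ` orbit p x"
  proof
    fix z assume "z \<in> orbit p (tau x)"
    then show "z \<in> tau ` orbit p x"
    proof induct
      case base
      then show ?case using assms[of x] orbit.base[of p x] by (metis imageI)
    next
      case (step y)
      then obtain w where "w \<in> orbit p x" "y = tau w" by auto
      then show ?case using assms[of w] orbit.step[of w p x] by (metis imageI)
    qed
  qed
next
  show "tau ` orbit p x \<subseteq> orbit p (tau x)"
  proof
    fix z assume "z \<in> tau ` orbit p x"
    then obtain w where w: "w \<in> orbit p x" "z = tau w" by auto
    from w(1) have "tau w \<in> orbit p (tau x)"
    proof induct
      case base
      then show ?case using assms[of x] orbit.base[of p "tau x"] by simp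
    next
      case (step y)
      then show ?case using assms[of y] orbit.step[of "tau y" p "tau x"] by simp
    qed
    then show "z \<in> orbit p (tau x)" using w by simp
  qed
qed

lemma cyc_len_comm:
  assumes "inj tau" "\<And>y. tau (p y) = p (tau y)"
  shows "cyc_len p (tau x) = cyc_len p x"
proof -
  have "orbit p (tau x) = tau ` orbit p x" by (rule orbit_comm) (rule assms(2))
  moreover have "inj_on tau (orbit p x)" using assms(1) by (metis inj_on_subset subset_UNIV)
  ultimately show ?thesis unfolding cyc_len_def by (simp add: card_image)
qed

lemma orbit_cong_sub:
  assumes "f ` M \<subseteq> M" "\<And>z. z \<in> M \<Longrightarrow> f z = g z" "y \<in> M"
  shows "orbit f y \<subseteq> orbit g y"
proof
  fix z assume "z \<in> orbit f y"
  then have "z \<in> M \<and> z \<in> orbit g y"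
  proof induct
    case base
    then show ?case using assms orbit.base[of g y] by auto
  next
    case (step w)
    then show ?case using assms orbit.step[of w g y] by auto
  qed
  then show "z \<in> orbit g y" by simp
qed

lemma orbit_cong:
  assumes "f ` M \<subseteq> M" "\<And>z. z \<in> M \<Longrightarrow> f z = g z" "y \<in> M"
  shows "orbit f y = orbit g y"
proof
  show "orbit f y \<subseteq> orbit g y" by (rule orbit_cong_sub[OF assms])
  have "g ` M \<subseteq> M" using assms(1,2) by auto
  then show "orbit g y \<subseteq> orbit f y"
    by (rule orbit_cong_sub) (use assms in auto)
qed

lemma funpow_in: "tau ` A \<subseteq> A \<Longrightarrow> x \<in> A \<Longrightarrow> (tau ^^ k) x \<in> A"
  by (induct k) auto

lemma restrict_funpow:
  assumes "tau ` A \<subseteq> A"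
  shows "(perm_restrict tau A) ^^ k = perm_restrict (tau ^^ k) A"
proof (induct k)
  case 0
  then show ?case by (auto simp: perm_restrict_def fun_eq_iff)
next
  case (Suc k)
  show ?case
  proof
    fix x
    show "(perm_restrict tau A ^^ Suc k) x = perm_restrict (tau ^^ Suc k) A x"
    proof -
      have "(perm_restrict tau A ^^ Suc k) x = perm_restrict tau A (perm_restrict (tau ^^ k) A x)"
        using Suc by simp
      then show ?thesis
        using funpow_in[OF assms, of x k] by (simp add: perm_restrict_def)
    qed
  qed
qed

lemma restrict_permutes:
  assumes "tau permutes M" "A \<subseteq> M" "finite A" "tau ` A \<subseteq> A"
  shows "perm_restrict tau A permutes A"
proof (rule bij_imp_permutes)
  have inj: "inj_on tau A" using permutes_inj[OF assms(1)] by (metis inj_on_subset subset_UNIV)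
  have "tau ` A = A" by (rule endo_inj_surj[OF assms(3) assms(4) inj])
  then have "bij_betw tau A A" using inj by (simp add: bij_betw_def)
  then show "bij_betw (perm_restrict tau A) A A"
    by (rule bij_betw_cong[THEN iffD1, rotated]) (simp add: perm_restrict_def)
  show "\<And>x. x \<notin> A \<Longrightarrow> perm_restrict tau A x = x" by (simp add: perm_restrict_def)
qed

lemma comp_funpow:
  assumes a: "a permutes A" and b: "b permutes B" and d: "A \<inter> B = {}"
  shows "(a \<circ> b) ^^ k = (\<lambda>x. if x \<in> A then (a ^^ k) x else (b ^^ k) x)"
proof (induct k)
  case 0
  then show ?case by auto
next
  case (Suc k)
  have ak: "(a ^^ k) permutes A" by (rule permutes_funpow[OF a])
  have bk: "(b ^^ k) permutes B" by (rule permutes_funpow[OF b])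
  show ?case
  proof
    fix x
    have step: "((a \<circ> b) ^^ Suc k) x = a (b (if x \<in> A then (a ^^ k) x else (b ^^ k) x))"
      by (simp only: funpow.simps(2) comp_apply Suc.hyps)
    show "((a \<circ> b) ^^ Suc k) x = (if x \<in> A then (a ^^ Suc k) x else (b ^^ Suc k) x)"
    proof (cases "x \<in> A")
      case True
      then have "(a ^^ k) x \<in> A" using ak by (simp add: permutes_in_image)
      then have "(a ^^ k) x \<notin> B" using d by blast
      then have "b ((a ^^ k) x) = (a ^^ k) x" using b by (simp add: permutes_not_in)
      then show ?thesis using step True by simp
    next
      case False
      have "(b ^^ k) x \<notin> A"
      proof (cases "x \<in> B")
        case True
        then show ?thesis using bk d by (auto simp: permutes_in_image)
      next
        case False
        then show ?thesis using bk \<open>x \<notin> A\<close> by (simp add: permutes_not_in)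
      qed
      then have bb: "b ((b ^^ k) x) \<notin> A"
      proof (cases "(b ^^ k) x \<in> B")
        case True
        then have "b ((b ^^ k) x) \<in> B" using b by (simp add: permutes_in_image)
        then show ?thesis using d by blast
      next
        case False
        then show ?thesis using b \<open>(b ^^ k) x \<notin> A\<close> by (simp add: permutes_not_in)
      qed
      then have "a (b ((b ^^ k) x)) = b ((b ^^ k) x)" using a by (simp add: permutes_not_in)
      then show ?thesis using step False by simp
    qed
  qed
qed

lemma two_block:
  assumes fin: "finite M" and MU: "M = A \<union> B" and d: "A \<inter> B = {}" and p: "p permutes M"
    and hyp: "\<And>tau. tau permutes M \<Longrightarrow> tau ^^ k = p \<Longrightarrow> tau ` A \<subseteq> A \<and> tau ` B \<subseteq> B"
  shows "SS k M p = SS k A (perm_restrict p A) * SS k B (perm_restrict p B)"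
proof -
  have fA: "finite A" and fB: "finite B" using fin MU by auto
  have "SS k M p = (\<Sum>ab\<in>RT k A (perm_restrict p A) \<times> RT k B (perm_restrict p B). sign (fst ab) * sign (snd ab))"
    unfolding SS_def
  proof (rule sum.reindex_bij_witness[where i = "\<lambda>ab. fst ab \<circ> snd ab"
        and j = "\<lambda>tau. (perm_restrict tau A, perm_restrict tau B)"])
    fix tau assume t: "tau \<in> RT k M p"
    then have tp: "tau permutes M" and tk: "tau ^^ k = p" by (auto simp: RT_def)
    have iA: "tau ` A \<subseteq> A" and iB: "tau ` B \<subseteq> B" using hyp[OF tp tk] by auto
    show eq: "fst (perm_restrict tau A, perm_restrict tau B) \<circ> snd (perm_restrict tau A, perm_restrict tau B) = tau"
    proof
      fix x
      show "(fst (perm_restrict tau A, perm_restrict tau B) \<circ> snd (perm_restrict tau A, perm_restrict tau B)) x = tau x"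
        using iA iB d tp MU by (auto simp: perm_restrict_def permutes_not_in)
    qed
    have pA: "perm_restrict tau A permutes A"
      by (rule restrict_permutes[OF tp _ fA iA]) (use MU in auto)
    have pB: "perm_restrict tau B permutes B"
      by (rule restrict_permutes[OF tp _ fB iB]) (use MU in auto)
    show "(perm_restrict tau A, perm_restrict tau B) \<in> RT k A (perm_restrict p A) \<times> RT k B (perm_restrict p B)"
      using pA pB restrict_funpow[OF iA, of k] restrict_funpow[OF iB, of k] tk
      by (auto simp: RT_def)
    have "sign tau = sign (perm_restrict tau A \<circ> perm_restrict tau B)"
      using eq by simp
    also have "\<dots> = sign (perm_restrict tau A) * sign (perm_restrict tau B)"
      by (rule sign_compose) (use pA pB fA fB permutation_permutes in blast)+
    finally show "sign (fst (perm_restrict tau A, perm_restrict tau B)) * sign (snd (perm_restrict tau A, perm_restrict tau B)) = sign tau"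
      by simp
  next
    fix ab assume ab: "ab \<in> RT k A (perm_restrict p A) \<times> RT k B (perm_restrict p B)"
    obtain a b where abd: "ab = (a, b)" by (cases ab)
    have a: "a permutes A" and ak: "a ^^ k = perm_restrict p A"
      and b: "b permutes B" and bk: "b ^^ k = perm_restrict p B"
      using ab abd by (auto simp: RT_def)
    show "(perm_restrict (fst ab \<circ> snd ab) A, perm_restrict (fst ab \<circ> snd ab) B) = ab"
    proof -
      have "perm_restrict (a \<circ> b) A = a"
      proof
        fix x show "perm_restrict (a \<circ> b) A x = a x"
        proof (cases "x \<in> A")
          case True
          then have "x \<notin> B" using d by blast
          then show ?thesis using True b by (simp add: perm_restrict_def permutes_not_in)
        next
          case False then show ?thesis using a by (simp add: perm_restrict_def permutes_not_in)
        qed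
      qed
      moreover have "perm_restrict (a \<circ> b) B = b"
      proof
        fix x show "perm_restrict (a \<circ> b) B x = b x"
        proof (cases "x \<in> B")
          case True
          then have "b x \<in> B" using b by (simp add: permutes_in_image)
          then have "b x \<notin> A" using d by auto
          then show ?thesis using True a by (simp add: perm_restrict_def permutes_not_in)
        next
          case False then show ?thesis using b by (simp add: perm_restrict_def permutes_not_in)
        qed
      qed
      ultimately show ?thesis using abd by simp
    qed
    have "a \<circ> b permutes M"
      using permutes_compose[OF permutes_subset[OF b] permutes_subset[OF a]] MU by auto
    moreover have "(a \<circ> b) ^^ k = p"
    proof
      fix x
      show "((a \<circ> b) ^^ k) x = p x"
        unfolding comp_funpow[OF a b d] ak bk
        using p MU by (auto simp: perm_restrict_def permutes_not_in)
    qed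
    ultimately show "fst ab \<circ> snd ab \<in> RT k M p" using abd by (simp add: RT_def)
  qed
  also have "\<dots> = SS k A (perm_restrict p A) * SS k B (perm_restrict p B)"
    unfolding SS_def sum_product sum.cartesian_product by (simp add: case_prod_beta)
  finally show ?thesis .
qed

lemma SS_empty: "SS k {} id = 1"
proof -
  have R: "RT k {} id = {id}" by (auto simp: RT_def permutes_empty)
  show ?thesis unfolding SS_def R by (simp add: sign_def evenperm_id)
qed

lemma sig_inv:
  assumes "sigma permutes N" "x \<in> N"
  shows "sigma x \<in> N \<and> cyc_len sigma (sigma x) = cyc_len sigma x"
  using assms cyc_len_comm[OF permutes_inj[OF assms(1)], of sigma]
  by (simp add: permutes_in_image)

lemma root_pres:
  fixes sigma :: "'a \<Rightarrow> 'a"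
  assumes s: "sigma permutes N"
    and M: "M = {x \<in> N. cyc_len sigma x \<in> L1}"
    and tp: "tau permutes M" and tk: "tau ^^ k = perm_restrict sigma M"
    and x: "x \<in> M"
  shows "tau x \<in> M \<and> cyc_len sigma (tau x) = cyc_len sigma x"
proof -
  let ?p = "perm_restrict sigma M"
  have inv: "sigma ` M \<subseteq> M" using sig_inv[OF s] M by auto
  have cl: "cyc_len ?p y = cyc_len sigma y" if "y \<in> M" for y
    unfolding cyc_len_def
    by (rule arg_cong[where f = card], rule orbit_cong[OF _ _ that])
      (use inv in \<open>auto simp: perm_restrict_def\<close>)
  have txM: "tau x \<in> M" using tp x by (simp add: permutes_in_image)
  have comm: "tau (?p y) = ?p (tau y)" for y
    using funpow_swap1[of tau k y] tk by simp
  have "cyc_len ?p (tau x) = cyc_len ?p x"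
    by (rule cyc_len_comm) (rule permutes_inj[OF tp], rule comm)
  then show ?thesis using cl[OF x] cl[OF txM] txM by simp
qed

lemma main_ind:
  fixes sigma :: "'a \<Rightarrow> 'a"
  assumes s: "sigma permutes N" and fN: "finite N" and L: "finite L"
  shows "SS k {x \<in> N. cyc_len sigma x \<in> L} (perm_restrict sigma {x \<in> N. cyc_len sigma x \<in> L})
    = (\<Prod>l\<in>L. SS k (cyc_block sigma N l) (perm_restrict sigma (cyc_block sigma N l)))"
  using L
proof (induct L rule: finite_induct)
  case empty
  have "perm_restrict sigma {} = id" by (auto simp: perm_restrict_def)
  then show ?case using SS_empty[of k] by (simp add: id_def)
next
  case (insert l L)
  define M where "M = {x \<in> N. cyc_len sigma x \<in> insert l L}"
  define A where "A = cyc_block sigma N l"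
  define B where "B = {x \<in> N. cyc_len sigma x \<in> L}"
  have A': "A = {x \<in> N. cyc_len sigma x \<in> {l}}" by (auto simp: A_def cyc_block_def)
  have MU: "M = A \<union> B" and d: "A \<inter> B = {}" using insert(2)
    by (auto simp: M_def A_def B_def cyc_block_def)
  have inv: "sigma ` M \<subseteq> M" using sig_inv[OF s] by (auto simp: M_def)
  have p: "perm_restrict sigma M permutes M"
    by (rule restrict_permutes[OF s _ _ inv]) (use fN in \<open>auto simp: M_def\<close>)
  have hyp: "tau ` A \<subseteq> A \<and> tau ` B \<subseteq> B"
    if "tau permutes M" "tau ^^ k = perm_restrict sigma M" for tau
    using root_pres[OF s M_def that] by (auto simp: A_def B_def M_def cyc_block_def)
  have fM: "finite M" using fN by (simp add: M_def)
  have "SS k M (perm_restrict sigma M)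
      = SS k A (perm_restrict sigma A) * SS k B (perm_restrict sigma B)"
    using two_block[OF fM MU d p hyp] MU
    by (simp add: perm_restrict_perm_restrict Int_absorb1 Int_absorb2)
  then show ?case using insert by (simp add: M_def A_def B_def)
qed

theorem lemma1:
  fixes k n :: nat and sigma :: "nat \<Rightarrow> nat"
  assumes "k > 0"
    and "sigma permutes {1..n}"
    and "\<exists>tau. tau permutes {1..n} \<and> tau ^^ k = sigma"
  shows "int (re k {1..n} sigma) - int (ro k {1..n} sigma)
       = (\<Prod>l \<in> cyc_len sigma ` {1..n}.
            int (re k (cyc_block sigma {1..n} l) (perm_restrict sigma (cyc_block sigma {1..n} l)))
          - int (ro k (cyc_block sigma {1..n} l) (perm_restrict sigma (cyc_block sigma {1..n} l))))"
proof -
  have N: "{x \<in> {1..n}. cyc_len sigma x \<in> cyc_len sigma ` {1..n}} = {1..n}" by auto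
  have "int (re k {1..n} sigma) - int (ro k {1..n} sigma) = SS k {1..n} sigma"
    by (rule diff_eq) simp
  also have "\<dots> = (\<Prod>l \<in> cyc_len sigma ` {1..n}.
      SS k (cyc_block sigma {1..n} l) (perm_restrict sigma (cyc_block sigma {1..n} l)))"
    using main_ind[OF assms(2), where k=k and L = "cyc_len sigma ` {1..n}"] N
      perm_restrict_id[OF assms(2)] by simp
  also have "\<dots> = (\<Prod>l \<in> cyc_len sigma ` {1..n}.
            int (re k (cyc_block sigma {1..n} l) (perm_restrict sigma (cyc_block sigma {1..n} l)))
          - int (ro k (cyc_block sigma {1..n} l) (perm_restrict sigma (cyc_block sigma {1..n} l))))"
    by (rule prod.cong[OF refl], rule diff_eq[symmetric]) (simp add: cyc_block_def)
  finally show ?thesis .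
qed

end
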